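(* There exist a $16\times16$ bimagic square and a $25\times25$ pandiagonal bimagic square, each with pairwise distinct entries that are nonnegative integers whose decimal digits all lie in $\{0,1,2\}$, both having the same magic sum $S1=222222220$; moreover each of the sixteen $4\times4$ blocks of the first is a magic square with magic sum $55555555$, and each of the twenty-five $5\times5$ blocks of the second is a magic square with magic sum $44444444$.
   Context: A magic square of order $n$ is an $n\times n$ array of numbers in which the sums of the entries of each row, of each column and of each of the two principal diagonals all equal a common value $S1$. It is bimagic if in addition the sums of the squares of the entries of each row, each column and each of the two principal diagonals all equal a common value $S2$. It is pandiagonal if all broken diagonals also have sum $S1$. The $m\times m$ blocks of an $m^2\times m^2$ array are the subarrays with rows $mp+1,\dots,mp+m$ and columns $mq+1,\dots,mq+m$, $0\le p,q\le m-1$. *)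

theory Defs
  imports Main
begin

text \<open>An n x n array is modelled as a function A :: nat => nat => int, with rows and
columns indexed by 0..n-1 (0-based). Only the values at indices below n matter.\<close>

definition magic_square :: "nat \<Rightarrow> int \<Rightarrow> (nat \<Rightarrow> nat \<Rightarrow> int) \<Rightarrow> bool" where
  "magic_square n S1 A \<longleftrightarrow>
     (\<forall>i<n. (\<Sum>j<n. A i j) = S1) \<and>
     (\<forall>j<n. (\<Sum>i<n. A i j) = S1) \<and>
     (\<Sum>i<n. A i i) = S1 \<and>
     (\<Sum>i<n. A i (n - 1 - i)) = S1"

definition bimagic_square :: "nat \<Rightarrow> int \<Rightarrow> (nat \<Rightarrow> nat \<Rightarrow> int) \<Rightarrow> bool" where
  "bimagic_square n S1 A \<longleftrightarrow> magic_square n S1 A \<and>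
     (\<exists>S2. magic_square n S2 (\<lambda>i j. (A i j)^2))"

definition pandiagonal :: "nat \<Rightarrow> int \<Rightarrow> (nat \<Rightarrow> nat \<Rightarrow> int) \<Rightarrow> bool" where
  "pandiagonal n S1 A \<longleftrightarrow>
     (\<forall>k<n. (\<Sum>i<n. A i ((i + k) mod n)) = S1) \<and>
     (\<forall>k<n. (\<Sum>i<n. A i ((k + n - i) mod n)) = S1)"

text \<open>The (p,q) block of size m: rows m*p+1..m*p+m, columns m*q+1..m*q+m (1-based).\<close>
definition block :: "nat \<Rightarrow> nat \<Rightarrow> nat \<Rightarrow> (nat \<Rightarrow> nat \<Rightarrow> int) \<Rightarrow> (nat \<Rightarrow> nat \<Rightarrow> int)" where
  "block m p q A = (\<lambda>i j. A (m * p + i) (m * q + j))"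

definition distinct_entries :: "nat \<Rightarrow> (nat \<Rightarrow> nat \<Rightarrow> int) \<Rightarrow> bool" where
  "distinct_entries n A \<longleftrightarrow> inj_on (\<lambda>(i, j). A i j) ({..<n} \<times> {..<n})"

definition digits_012 :: "int \<Rightarrow> bool" where
  "digits_012 x \<longleftrightarrow> x \<ge> 0 \<and> (\<forall>k::nat. (x div 10 ^ k) mod 10 \<in> {0, 1, 2})"

end

theory Submission
  imports Defs
begin

lemma ball_upt: "(\<forall>i<n. P i) = list_all P [0..<n]"
  by (auto simp: list_all_iff)

lemma sum_upt: "(\<Sum>i<n. f i) = sum_list (map f [0..<n])"
  by (metis atLeast0LessThan atLeastLessThan_upt sum_set_upt_conv_sum_list_nat)

fun val :: "nat list \<Rightarrow> int" where
  "val [] = 0"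
| "val (d # ds) = int d + 10 * val ds"

lemma val_nonneg: "0 \<le> val ds"
  by (induction ds) auto

lemma val_digit:
  assumes "\<forall>d\<in>set ds. d < 10"
  shows "(val ds div 10 ^ k) mod 10 = (if k < length ds then int (ds ! k) else 0)"
  using assms
proof (induction ds arbitrary: k)
  case Nil then show ?case by simp
next
  case (Cons d ds)
  have d: "int d < 10" using Cons.prems by simp
  have v: "(int d + 10 * val ds) div 10 = val ds" using d by simp
  show ?case
  proof (cases k)
    case 0
    then show ?thesis using d by simp
  next
    case (Suc k')
    have "(int d + 10 * val ds) div 10 ^ k = ((int d + 10 * val ds) div 10) div 10 ^ k'"
      using Suc by (simp add: zdiv_zmult2_eq)
    also have "\<dots> = val ds div 10 ^ k'" using v by simp
    finally show ?thesis using Cons Suc by simp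
  qed
qed

definition wf_digs :: "nat list \<Rightarrow> bool" where
  "wf_digs ds \<longleftrightarrow> length ds = 8 \<and> list_all (\<lambda>d. d \<le> 2) ds"

lemma wf_digits_012: "wf_digs ds \<Longrightarrow> digits_012 (val ds)"
  unfolding digits_012_def
proof (intro conjI allI)
  assume w: "wf_digs ds"
  show "0 \<le> val ds" by (rule val_nonneg)
  fix k
  have "\<forall>d\<in>set ds. d < 10" using w by (auto simp: wf_digs_def list_all_iff)
  then have e: "(val ds div 10 ^ k) mod 10 = (if k < length ds then int (ds ! k) else 0)"
    by (rule val_digit)
  show "(val ds div 10 ^ k) mod 10 \<in> {0,1,2}"
  proof (cases "k < length ds")
    case True
    then have "ds ! k \<le> 2" using w by (auto simp: wf_digs_def list_all_iff)
    then have "int (ds ! k) \<in> {0,1,2}" by auto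
    then show ?thesis using e True by simp
  qed (use e in simp)
qed

definition digs8 :: "int \<Rightarrow> nat list" where
  "digs8 x = map (\<lambda>k. nat ((x div 10 ^ k) mod 10)) [0..<8]"

lemma digs8_val: "wf_digs ds \<Longrightarrow> digs8 (val ds) = ds"
proof -
  assume w: "wf_digs ds"
  then have l: "length ds = 8" and dl: "\<forall>d\<in>set ds. d < 10" by (auto simp: wf_digs_def list_all_iff)
  from dl have e: "\<And>k. (val ds div 10 ^ k) mod 10 = (if k < length ds then int (ds ! k) else 0)"
    by (rule val_digit)
  show ?thesis unfolding digs8_def
    by (rule nth_equalityI) (auto simp: l e)
qed

lemma cells_check:
  assumes "list_all (list_all P) M" "length M = n" "list_all (\<lambda>row. length row = n) M"
  shows "\<forall>i<n. \<forall>j<n. P (M ! i ! j)"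
proof (intro allI impI)
  fix i j assume "i < n" "j < n"
  then have "M ! i \<in> set M" using assms(2) by simp
  then have "list_all P (M ! i)" "length (M ! i) = n" using assms(1,3) by (auto simp: list_all_iff)
  then show "P (M ! i ! j)" using \<open>j < n\<close> by (auto simp: list_all_iff)
qed

lemma map_map_nth:
  assumes "map (map f) M = map (\<lambda>i. map (g i) [0..<n]) [0..<n]" "i < n" "j < n"
  shows "f (M ! i ! j) = g i j"
proof -
  have lenM: "length M = n" using arg_cong[OF assms(1), of length] by simp
  have "map (map f) M ! i = map (g i) [0..<n]" using assms by simp
  then have mi: "map f (M ! i) = map (g i) [0..<n]" using lenM assms(2) by simp
  have "length (map f (M ! i)) = length (map (g i) [0..<n])" using mi by (rule arg_cong)
  then have "length (M ! i) = n" by simp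
  then show ?thesis using arg_cong[OF mi, of "\<lambda>xs. xs ! j"] assms by simp
qed

lemma entries_from_digits:
  assumes val: "map (map val) MD = map (\<lambda>i. map (\<lambda>j. A i j) [0..<n]) [0..<n]"
    and wf: "list_all (list_all wf_digs) MD" "length MD = n" "list_all (\<lambda>row. length row = n) MD"
    and dec: "map (map Dl) MD = map (\<lambda>i. map (\<lambda>j. (i, j)) [0..<n]) [0..<n]"
  shows "distinct_entries n A" "\<forall>i<n. \<forall>j<n. digits_012 (A i j)"
proof -
  have w: "\<forall>i<n. \<forall>j<n. wf_digs (MD ! i ! j)" by (rule cells_check[OF wf])
  have a: "A i j = val (MD ! i ! j)" if "i < n" "j < n" for i j
    using map_map_nth[OF val that] by simp
  have key: "Dl (digs8 (A i j)) = (i, j)" if "i < n" "j < n" for i j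
    using a[OF that] w that digs8_val map_map_nth[OF dec that] by simp
  show "distinct_entries n A" unfolding distinct_entries_def
    by (rule inj_on_inverseI[where g = "\<lambda>x. Dl (digs8 x)"]) (auto simp: key)
  show "\<forall>i<n. \<forall>j<n. digits_012 (A i j)"
    using a w wf_digits_012 by simp
qed

definition hz16 :: "nat list \<Rightarrow> nat \<Rightarrow> nat" where
  "hz16 ds m = [0,0,0,0,0,1,2,3,0::nat] ! (3 * (ds ! (2*m)) + ds ! (2*m+1))"

definition D16 :: "nat list \<Rightarrow> nat \<times> nat" where
  "D16 ds = (let h0 = hz16 ds 0; h1 = hz16 ds 1; h2 = hz16 ds 2; h3 = hz16 ds 3;
      z0 = h0 div 2; z1 = h0 mod 2; z2 = h1 div 2; z3 = h1 mod 2;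
      z4 = h2 div 2; z5 = h2 mod 2; z6 = h3 div 2; z7 = h3 mod 2
    in (1 * ((z1 + z2 + z3 + z6) mod 2) + 2 * ((z1 + z3 + z4) mod 2) + 4 * ((z0 + z1 + z3 + z5 + z6) mod 2) + 8 * ((z1 + z2 + z4 + z5 + z6 + z7) mod 2), 1 * ((z2 + z3 + z5 + z7) mod 2) + 2 * ((z1 + z4 + z5 + z7) mod 2) + 4 * ((z0 + z2 + z3 + z4 + z5 + z6 + z7) mod 2) + 8 * ((z0 + z1 + z3 + z4 + z7) mod 2)))"

definition hz25 :: "nat list \<Rightarrow> nat \<Rightarrow> nat" where
  "hz25 ds m = [0,1,0,2,0,3,0,4,0::nat] ! (3 * (ds ! (2*m)) + ds ! (2*m+1))"

definition D25 :: "nat list \<Rightarrow> nat \<times> nat" where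
  "D25 ds = (let y0 = hz25 ds 0; y1 = hz25 ds 1; y2 = hz25 ds 2; y3 = hz25 ds 3
    in (((3 * y0 + y2 + 2 * y3) mod 5) + 5 * ((4 * y0 + 2 * y1 + 2 * y2 + 3 * y3) mod 5), ((4 * y0 + 3 * y2 + 4 * y3) mod 5) + 5 * ((3 * y0 + y1 + 4 * y2 + 4 * y3) mod 5)))"

definition M16 :: "int list list" where "M16 = [[20202020, 2211221, 21020212, 12122102, 21212002, 12201212, 20120221, 2022120, 21202121, 12210220, 20021202, 2122012, 20212112, 2200202, 21121220, 12022021],
  [21022102, 12120212, 20201221, 2212020, 20122120, 2020221, 21211212, 12202002, 20022012, 2121202, 21200220, 12212121, 21122021, 12021220, 20210202, 2202112],
  [12121221, 21022020, 2212102, 20200212, 2021212, 20122002, 12202120, 21210221, 2120220, 20022121, 12212012, 21201202, 12020202, 21122112, 2202021, 20211220],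
  [2210212, 20202102, 12122020, 21021221, 12200221, 21212120, 2022002, 20121212, 12211202, 21202012, 2122121, 20020220, 2201220, 20212021, 12022112, 21120202],
  [20212121, 2200220, 21121202, 12022012, 21202112, 12210202, 20021220, 2122021, 21212020, 12201221, 20120212, 2022102, 20202002, 2211212, 21020221, 12122120],
  [21122012, 12021202, 20210220, 2202121, 20022021, 2121220, 21200202, 12212112, 20122102, 2020212, 21211221, 12202020, 21022120, 12120221, 20201212, 2212002],
  [12020220, 21122121, 2202012, 20211202, 2120202, 20022112, 12212021, 21201220, 2021221, 20122020, 12202102, 21210212, 12121212, 21022002, 2212120, 20200221],
  [2201202, 20212012, 12022121, 21120220, 12211220, 21202021, 2122112, 20020202, 12200212, 21212102, 2022020, 20121221, 2210221, 20202120, 12122002, 21021212],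
  [2022021, 20121220, 12200202, 21212112, 12122012, 21021202, 2210220, 20202121, 12022120, 21120221, 2201212, 20212002, 2122102, 20020212, 12211221, 21202020],
  [12202112, 21210202, 2021220, 20122021, 2212121, 20200220, 12121202, 21022012, 2202002, 20211212, 12020221, 21122120, 12212020, 21201221, 2120212, 20022102],
  [21211220, 12202021, 20122112, 2020202, 20201202, 2212012, 21022121, 12120220, 20210221, 2202120, 21122002, 12021212, 21200212, 12212102, 20022020, 2121221],
  [20120202, 2022112, 21212021, 12201220, 21020220, 12122121, 20202012, 2211202, 21121212, 12022002, 20212120, 2200221, 20021221, 2122020, 21202102, 12210212],
  [2122120, 20020221, 12211212, 21202002, 12022102, 21120212, 2201221, 20212020, 12122021, 21021220, 2210202, 20202112, 2022012, 20121202, 12200220, 21212121],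
  [12212002, 21201212, 2120221, 20022120, 2202020, 20211221, 12020212, 21122102, 2212112, 20200202, 12121220, 21022021, 12202121, 21210220, 2021202, 20122012],
  [21200221, 12212120, 20022002, 2121212, 20210212, 2202102, 21122020, 12021221, 20201220, 2212021, 21022112, 12120202, 21211202, 12202012, 20122121, 2020220],
  [20021212, 2122002, 21202120, 12210221, 21121221, 12022020, 20212102, 2200212, 21020202, 12122112, 20202021, 2211220, 20120220, 2022121, 21212012, 12201202]]"

definition MD16 :: "nat list list list" where "MD16 = [[[0,2,0,2,0,2,0,2], [1,2,2,1,1,2,2,0], [2,1,2,0,2,0,1,2], [2,0,1,2,2,1,2,1], [2,0,0,2,1,2,1,2], [2,1,2,1,0,2,2,1], [1,2,2,0,2,1,0,2], [0,2,1,2,2,0,2,0], [1,2,1,2,0,2,1,2], [0,2,2,0,1,2,2,1], [2,0,2,1,2,0,0,2], [2,1,0,2,2,1,2,0], [2,1,1,2,1,2,0,2], [2,0,2,0,0,2,2,0], [0,2,2,1,2,1,1,2], [1,2,0,2,2,0,2,1]],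
  [[2,0,1,2,2,0,1,2], [2,1,2,0,2,1,2,1], [1,2,2,1,0,2,0,2], [0,2,0,2,1,2,2,0], [0,2,1,2,2,1,0,2], [1,2,2,0,2,0,2,0], [2,1,2,1,1,2,1,2], [2,0,0,2,0,2,2,1], [2,1,0,2,2,0,0,2], [2,0,2,1,2,1,2,0], [0,2,2,0,0,2,1,2], [1,2,1,2,1,2,2,1], [1,2,0,2,2,1,1,2], [0,2,2,1,2,0,2,1], [2,0,2,0,1,2,0,2], [2,1,1,2,0,2,2,0]],
  [[1,2,2,1,2,1,2,1], [0,2,0,2,2,0,1,2], [2,0,1,2,1,2,2,0], [2,1,2,0,0,2,0,2], [2,1,2,1,2,0,2,0], [2,0,0,2,2,1,0,2], [0,2,1,2,0,2,2,1], [1,2,2,0,1,2,1,2], [0,2,2,0,2,1,2,0], [1,2,1,2,2,0,0,2], [2,1,0,2,1,2,2,1], [2,0,2,1,0,2,1,2], [2,0,2,0,2,0,2,1], [2,1,1,2,2,1,1,2], [1,2,0,2,0,2,2,0], [0,2,2,1,1,2,0,2]],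
  [[2,1,2,0,1,2,2,0], [2,0,1,2,0,2,0,2], [0,2,0,2,2,1,2,1], [1,2,2,1,2,0,1,2], [1,2,2,0,0,2,2,1], [0,2,1,2,1,2,1,2], [2,0,0,2,2,0,2,0], [2,1,2,1,2,1,0,2], [2,0,2,1,1,2,2,1], [2,1,0,2,0,2,1,2], [1,2,1,2,2,1,2,0], [0,2,2,0,2,0,0,2], [0,2,2,1,0,2,2,0], [1,2,0,2,1,2,0,2], [2,1,1,2,2,0,2,1], [2,0,2,0,2,1,1,2]],
  [[1,2,1,2,1,2,0,2], [0,2,2,0,0,2,2,0], [2,0,2,1,2,1,1,2], [2,1,0,2,2,0,2,1], [2,1,1,2,0,2,1,2], [2,0,2,0,1,2,2,1], [0,2,2,1,2,0,0,2], [1,2,0,2,2,1,2,0], [0,2,0,2,1,2,1,2], [1,2,2,1,0,2,2,1], [2,1,2,0,2,1,0,2], [2,0,1,2,2,0,2,0], [2,0,0,2,0,2,0,2], [2,1,2,1,1,2,2,0], [1,2,2,0,2,0,1,2], [0,2,1,2,2,1,2,1]],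
  [[2,1,0,2,2,1,1,2], [2,0,2,1,2,0,2,1], [0,2,2,0,1,2,0,2], [1,2,1,2,0,2,2,0], [1,2,0,2,2,0,0,2], [0,2,2,1,2,1,2,0], [2,0,2,0,0,2,1,2], [2,1,1,2,1,2,2,1], [2,0,1,2,2,1,0,2], [2,1,2,0,2,0,2,0], [1,2,2,1,1,2,1,2], [0,2,0,2,0,2,2,1], [0,2,1,2,2,0,1,2], [1,2,2,0,2,1,2,1], [2,1,2,1,0,2,0,2], [2,0,0,2,1,2,2,0]],
  [[0,2,2,0,2,0,2,1], [1,2,1,2,2,1,1,2], [2,1,0,2,0,2,2,0], [2,0,2,1,1,2,0,2], [2,0,2,0,2,1,2,0], [2,1,1,2,2,0,0,2], [1,2,0,2,1,2,2,1], [0,2,2,1,0,2,1,2], [1,2,2,1,2,0,2,0], [0,2,0,2,2,1,0,2], [2,0,1,2,0,2,2,1], [2,1,2,0,1,2,1,2], [2,1,2,1,2,1,2,1], [2,0,0,2,2,0,1,2], [0,2,1,2,1,2,2,0], [1,2,2,0,0,2,0,2]],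
  [[2,0,2,1,0,2,2,0], [2,1,0,2,1,2,0,2], [1,2,1,2,2,0,2,1], [0,2,2,0,2,1,1,2], [0,2,2,1,1,2,2,1], [1,2,0,2,0,2,1,2], [2,1,1,2,2,1,2,0], [2,0,2,0,2,0,0,2], [2,1,2,0,0,2,2,1], [2,0,1,2,1,2,1,2], [0,2,0,2,2,0,2,0], [1,2,2,1,2,1,0,2], [1,2,2,0,1,2,2,0], [0,2,1,2,0,2,0,2], [2,0,0,2,2,1,2,1], [2,1,2,1,2,0,1,2]],
  [[1,2,0,2,2,0,2,0], [0,2,2,1,2,1,0,2], [2,0,2,0,0,2,2,1], [2,1,1,2,1,2,1,2], [2,1,0,2,2,1,2,1], [2,0,2,1,2,0,1,2], [0,2,2,0,1,2,2,0], [1,2,1,2,0,2,0,2], [0,2,1,2,2,0,2,1], [1,2,2,0,2,1,1,2], [2,1,2,1,0,2,2,0], [2,0,0,2,1,2,0,2], [2,0,1,2,2,1,2,0], [2,1,2,0,2,0,0,2], [1,2,2,1,1,2,2,1], [0,2,0,2,0,2,1,2]],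
  [[2,1,1,2,0,2,2,1], [2,0,2,0,1,2,1,2], [0,2,2,1,2,0,2,0], [1,2,0,2,2,1,0,2], [1,2,1,2,1,2,2,0], [0,2,2,0,0,2,0,2], [2,0,2,1,2,1,2,1], [2,1,0,2,2,0,1,2], [2,0,0,2,0,2,2,0], [2,1,2,1,1,2,0,2], [1,2,2,0,2,0,2,1], [0,2,1,2,2,1,1,2], [0,2,0,2,1,2,2,1], [1,2,2,1,0,2,1,2], [2,1,2,0,2,1,2,0], [2,0,1,2,2,0,0,2]],
  [[0,2,2,1,1,2,1,2], [1,2,0,2,0,2,2,1], [2,1,1,2,2,1,0,2], [2,0,2,0,2,0,2,0], [2,0,2,1,0,2,0,2], [2,1,0,2,1,2,2,0], [1,2,1,2,2,0,1,2], [0,2,2,0,2,1,2,1], [1,2,2,0,1,2,0,2], [0,2,1,2,0,2,2,0], [2,0,0,2,2,1,1,2], [2,1,2,1,2,0,2,1], [2,1,2,0,0,2,1,2], [2,0,1,2,1,2,2,1], [0,2,0,2,2,0,0,2], [1,2,2,1,2,1,2,0]],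
  [[2,0,2,0,2,1,0,2], [2,1,1,2,2,0,2,0], [1,2,0,2,1,2,1,2], [0,2,2,1,0,2,2,1], [0,2,2,0,2,0,1,2], [1,2,1,2,2,1,2,1], [2,1,0,2,0,2,0,2], [2,0,2,1,1,2,2,0], [2,1,2,1,2,1,1,2], [2,0,0,2,2,0,2,1], [0,2,1,2,1,2,0,2], [1,2,2,0,0,2,2,0], [1,2,2,1,2,0,0,2], [0,2,0,2,2,1,2,0], [2,0,1,2,0,2,1,2], [2,1,2,0,1,2,2,1]],
  [[0,2,1,2,2,1,2,0], [1,2,2,0,2,0,0,2], [2,1,2,1,1,2,2,1], [2,0,0,2,0,2,1,2], [2,0,1,2,2,0,2,1], [2,1,2,0,2,1,1,2], [1,2,2,1,0,2,2,0], [0,2,0,2,1,2,0,2], [1,2,0,2,2,1,2,1], [0,2,2,1,2,0,1,2], [2,0,2,0,1,2,2,0], [2,1,1,2,0,2,0,2], [2,1,0,2,2,0,2,0], [2,0,2,1,2,1,0,2], [0,2,2,0,0,2,2,1], [1,2,1,2,1,2,1,2]],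
  [[2,0,0,2,1,2,2,1], [2,1,2,1,0,2,1,2], [1,2,2,0,2,1,2,0], [0,2,1,2,2,0,0,2], [0,2,0,2,0,2,2,0], [1,2,2,1,1,2,0,2], [2,1,2,0,2,0,2,1], [2,0,1,2,2,1,1,2], [2,1,1,2,1,2,2,0], [2,0,2,0,0,2,0,2], [0,2,2,1,2,1,2,1], [1,2,0,2,2,0,1,2], [1,2,1,2,0,2,2,1], [0,2,2,0,1,2,1,2], [2,0,2,1,2,0,2,0], [2,1,0,2,2,1,0,2]],
  [[1,2,2,0,0,2,1,2], [0,2,1,2,1,2,2,1], [2,0,0,2,2,0,0,2], [2,1,2,1,2,1,2,0], [2,1,2,0,1,2,0,2], [2,0,1,2,0,2,2,0], [0,2,0,2,2,1,1,2], [1,2,2,1,2,0,2,1], [0,2,2,1,0,2,0,2], [1,2,0,2,1,2,2,0], [2,1,1,2,2,0,1,2], [2,0,2,0,2,1,2,1], [2,0,2,1,1,2,1,2], [2,1,0,2,0,2,2,1], [1,2,1,2,2,1,0,2], [0,2,2,0,2,0,2,0]],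
  [[2,1,2,1,2,0,0,2], [2,0,0,2,2,1,2,0], [0,2,1,2,0,2,1,2], [1,2,2,0,1,2,2,1], [1,2,2,1,2,1,1,2], [0,2,0,2,2,0,2,1], [2,0,1,2,1,2,0,2], [2,1,2,0,0,2,2,0], [2,0,2,0,2,0,1,2], [2,1,1,2,2,1,2,1], [1,2,0,2,0,2,0,2], [0,2,2,1,1,2,2,0], [0,2,2,0,2,1,0,2], [1,2,1,2,2,0,2,0], [2,1,0,2,1,2,1,2], [2,0,2,1,0,2,2,1]]]"

definition M25 :: "int list list" where "M25 = [[0, 1210110, 12101201, 10121021, 21012112, 102121, 1120012, 12010100, 10001210, 21211001, 11010, 1002101, 12210021, 10100112, 21121200, 211212, 1101000, 12122110, 10010001, 21000121, 120101, 1011221, 12001012, 10212100, 21100010],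
  [12121221, 10011012, 21002100, 210010, 1100101, 12000110, 10211201, 21101021, 122112, 1010000, 12100012, 10120100, 21011210, 1001, 1212121, 12012101, 10000021, 21210112, 101200, 1121010, 12211000, 10102110, 21120001, 10121, 1001212],
  [21212110, 100001, 1120121, 12011212, 10001000, 21121012, 12100, 1000010, 12210101, 10101221, 21001201, 211021, 1102112, 12120000, 10010110, 21100100, 121210, 1011001, 12002121, 10210012, 21010021, 112, 1211200, 12101010, 10122101],
  [1010112, 12001200, 10211010, 21102101, 120021, 1210001, 12100121, 10121212, 21011000, 2110, 1122100, 12010010, 10000101, 21211221, 101012, 1001021, 12212112, 10100000, 21120110, 11201, 1101210, 12121001, 10012121, 21000012, 210100],
  [10101001, 21122121, 10012, 1000100, 12211210, 10011200, 21001010, 212101, 1100021, 12120112, 10210121, 21101212, 121000, 1012110, 12000001, 10120010, 21010101, 1221, 1211012, 12102100, 10002112, 21210000, 100110, 1121201, 12011021],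
  [11210, 1001001, 12212121, 10100012, 21120100, 210112, 1101200, 12121010, 10012101, 21000021, 120001, 1010121, 12001212, 10211000, 21102110, 2100, 1210010, 12100101, 10121221, 21011012, 101021, 1122112, 12010000, 10000110, 21211201],
  [12102112, 10120000, 21010110, 1201, 1211021, 12011001, 10002121, 21210012, 100100, 1121210, 12211200, 10101010, 21122101, 10021, 1000112, 12120121, 10011212, 21001000, 212110, 1100001, 12000010, 10210101, 21101221, 121012, 1012100],
  [21000101, 211221, 1101012, 12122100, 10010010, 21100000, 120110, 1011201, 12001021, 10212112, 21012121, 12, 1210100, 12101210, 10121001, 21211010, 102101, 1120021, 12010112, 10001200, 21121212, 11000, 1002110, 12210001, 10100121],
  [1121000, 12012110, 10000001, 21210121, 101212, 1001221, 12211012, 10102100, 21120010, 10101, 1100110, 12121201, 10011021, 21002112, 210000, 1010012, 12000100, 10211210, 21101001, 122121, 1212101, 12100021, 10120112, 21011200, 1010],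
  [10210021, 21100112, 121200, 1011010, 12002101, 10122110, 21010001, 121, 1211212, 12101000, 10001012, 21212100, 100010, 1120101, 12011221, 10101201, 21121021, 12112, 1000000, 12210110, 10010100, 21001210, 211001, 1102121, 12120012],
  [122101, 1010021, 12000112, 10211200, 21101010, 1000, 1212110, 12100001, 10120121, 21011212, 101221, 1121012, 12012100, 10000010, 21210101, 10110, 1001201, 12211021, 10102112, 21120000, 210012, 1100100, 12121210, 10011001, 21002121],
  [12210100, 10101210, 21121001, 12121, 1000012, 12120021, 10010112, 21001200, 211010, 1102101, 12002110, 10210001, 21100121, 121212, 1011000, 12101012, 10122100, 21010010, 101, 1211221, 12011201, 10001021, 21212112, 100000, 1120110],
  [21011021, 2112, 1210000, 12100110, 10121201, 21211210, 101001, 1122121, 12010012, 10000100, 21120112, 11200, 1001010, 12212101, 10100021, 21000001, 210121, 1101212, 12121000, 10012110, 21102100, 120010, 1010101, 12001221, 10211012],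
  [1100010, 12120101, 10011221, 21001012, 212100, 1012112, 12000000, 10210110, 21101201, 121021, 1211001, 12102121, 10120012, 21010100, 1210, 1121200, 12011010, 10002101, 21210021, 100112, 1000121, 12211212, 10101000, 21122110, 10001],
  [10001212, 21211000, 102110, 1120001, 12010121, 10100101, 21121221, 11012, 1002100, 12210010, 10010000, 21000110, 211201, 1101021, 12122112, 10212121, 21100012, 120100, 1011210, 12001001, 10121010, 21012101, 21, 1210112, 12101200],
  [100121, 1121212, 12011000, 10002110, 21210001, 10010, 1000101, 12211221, 10101012, 21122100, 212112, 1100000, 12120110, 10011201, 21001021, 121001, 1012121, 12000012, 10210100, 21101210, 1200, 1211010, 12102101, 10120021, 21010112],
  [12001010, 10212101, 21100021, 120112, 1011200, 12101212, 10121000, 21012110, 1, 1210121, 12010101, 10001221, 21211012, 102100, 1120010, 12210000, 10100110, 21121201, 11021, 1002112, 12122121, 10010012, 21000100, 211210, 1101001],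
  [21120012, 10100, 1001210, 12211001, 10102121, 21002101, 210021, 1100112, 12121200, 10011010, 21101000, 122110, 1010001, 12000121, 10211212, 21011221, 1012, 1212100, 12100010, 10120101, 21210110, 101201, 1121021, 12012112, 10000000],
  [1211201, 12101021, 10122112, 21010000, 110, 1120100, 12011210, 10001001, 21212121, 100012, 1000021, 12210112, 10101200, 21121010, 12101, 1102110, 12120001, 10010121, 21001212, 211000, 1011012, 12002100, 10210010, 21100101, 121221],
  [10012100, 21000010, 210101, 1101221, 12121012, 10211021, 21102112, 120000, 1010110, 12001201, 10121210, 21011001, 2121, 1210012, 12100100, 10000112, 21211200, 101010, 1122101, 12010021, 10100001, 21120121, 11212, 1001000, 12212110],
  [211012, 1102100, 12120010, 10010101, 21001221, 121201, 1011021, 12002112, 10210000, 21100110, 100, 1211210, 12101001, 10122121, 21010012, 100021, 1120112, 12011200, 10001010, 21212101, 12110, 1000001, 12210121, 10101212, 21121000],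
  [12010001, 10000121, 21211212, 101000, 1122110, 12212100, 10100010, 21120101, 11221, 1001012, 12121021, 10012112, 21000000, 210110, 1101201, 12001210, 10211001, 21102121, 120012, 1010100, 12100112, 10121200, 21011010, 2101, 1210021],
  [21101200, 121010, 1012101, 12000021, 10210112, 21010121, 1212, 1211000, 12102110, 10120001, 21210010, 100101, 1121221, 12011012, 10002100, 21122112, 10000, 1000110, 12211201, 10101021, 21001001, 212121, 1100012, 12120100, 10011210],
  [1002121, 12210012, 10100100, 21121210, 11001, 1101010, 12122101, 10010021, 21000112, 211200, 1011212, 12001000, 10212110, 21100001, 120121, 1210101, 12101221, 10121012, 21012100, 10, 1120000, 12010110, 10001201, 21211021, 102112],
  [10120110, 21011201, 1021, 1212112, 12100000, 10000012, 21210100, 101210, 1121001, 12012121, 10102101, 21120021, 10112, 1001200, 12211010, 10011000, 21002110, 210001, 1100121, 12121212, 10211221, 21101012, 122100, 1010010, 12000101]]"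

definition MD25 :: "nat list list list" where "MD25 = [[[0,0,0,0,0,0,0,0], [0,1,1,0,1,2,1,0], [1,0,2,1,0,1,2,1], [1,2,0,1,2,1,0,1], [2,1,1,2,1,0,1,2], [1,2,1,2,0,1,0,0], [2,1,0,0,2,1,1,0], [0,0,1,0,1,0,2,1], [0,1,2,1,0,0,0,1], [1,0,0,1,1,2,1,2], [0,1,0,1,1,0,0,0], [1,0,1,2,0,0,1,0], [1,2,0,0,1,2,2,1], [2,1,1,0,0,1,0,1], [0,0,2,1,2,1,1,2], [2,1,2,1,1,2,0,0], [0,0,0,1,0,1,1,0], [0,1,1,2,2,1,2,1], [1,0,0,0,1,0,0,1], [1,2,1,0,0,0,1,2], [1,0,1,0,2,1,0,0], [1,2,2,1,1,0,1,0], [2,1,0,1,0,0,2,1], [0,0,1,2,1,2,0,1], [0,1,0,0,0,1,1,2]],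
  [[1,2,2,1,2,1,2,1], [2,1,0,1,1,0,0,1], [0,0,1,2,0,0,1,2], [0,1,0,0,1,2,0,0], [1,0,1,0,0,1,1,0], [0,1,1,0,0,0,2,1], [1,0,2,1,1,2,0,1], [1,2,0,1,0,1,1,2], [2,1,1,2,2,1,0,0], [0,0,0,0,1,0,1,0], [2,1,0,0,0,1,2,1], [0,0,1,0,2,1,0,1], [0,1,2,1,1,0,1,2], [1,0,0,1,0,0,0,0], [1,2,1,2,1,2,1,0], [1,0,1,2,1,0,2,1], [1,2,0,0,0,0,0,1], [2,1,1,0,1,2,1,2], [0,0,2,1,0,1,0,0], [0,1,0,1,2,1,1,0], [0,0,0,1,1,2,2,1], [0,1,1,2,0,1,0,1], [1,0,0,0,2,1,1,2], [1,2,1,0,1,0,0,0], [2,1,2,1,0,0,1,0]],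
  [[0,1,1,2,1,2,1,2], [1,0,0,0,0,1,0,0], [1,2,1,0,2,1,1,0], [2,1,2,1,1,0,2,1], [0,0,0,1,0,0,0,1], [2,1,0,1,2,1,1,2], [0,0,1,2,1,0,0,0], [0,1,0,0,0,0,1,0], [1,0,1,0,1,2,2,1], [1,2,2,1,0,1,0,1], [1,0,2,1,0,0,1,2], [1,2,0,1,1,2,0,0], [2,1,1,2,0,1,1,0], [0,0,0,0,2,1,2,1], [0,1,1,0,1,0,0,1], [0,0,1,0,0,1,1,2], [0,1,2,1,2,1,0,0], [1,0,0,1,1,0,1,0], [1,2,1,2,0,0,2,1], [2,1,0,0,1,2,0,1], [1,2,0,0,1,0,1,2], [2,1,1,0,0,0,0,0], [0,0,2,1,1,2,1,0], [0,1,0,1,0,1,2,1], [1,0,1,2,2,1,0,1]],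
  [[2,1,1,0,1,0,1,0], [0,0,2,1,0,0,2,1], [0,1,0,1,1,2,0,1], [1,0,1,2,0,1,1,2], [1,2,0,0,2,1,0,0], [1,0,0,0,1,2,1,0], [1,2,1,0,0,1,2,1], [2,1,2,1,2,1,0,1], [0,0,0,1,1,0,1,2], [0,1,1,2,0,0,0,0], [0,0,1,2,2,1,1,0], [0,1,0,0,1,0,2,1], [1,0,1,0,0,0,0,1], [1,2,2,1,1,2,1,2], [2,1,0,1,0,1,0,0], [1,2,0,1,0,0,1,0], [2,1,1,2,1,2,2,1], [0,0,0,0,0,1,0,1], [0,1,1,0,2,1,1,2], [1,0,2,1,1,0,0,0], [0,1,2,1,0,1,1,0], [1,0,0,1,2,1,2,1], [1,2,1,2,1,0,0,1], [2,1,0,0,0,0,1,2], [0,0,1,0,1,2,0,0]],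
  [[1,0,0,1,0,1,0,1], [1,2,1,2,2,1,1,2], [2,1,0,0,1,0,0,0], [0,0,1,0,0,0,1,0], [0,1,2,1,1,2,2,1], [0,0,2,1,1,0,0,1], [0,1,0,1,0,0,1,2], [1,0,1,2,1,2,0,0], [1,2,0,0,0,1,1,0], [2,1,1,0,2,1,2,1], [1,2,1,0,1,2,0,1], [2,1,2,1,0,1,1,2], [0,0,0,1,2,1,0,0], [0,1,1,2,1,0,1,0], [1,0,0,0,0,0,2,1], [0,1,0,0,2,1,0,1], [1,0,1,0,1,0,1,2], [1,2,2,1,0,0,0,0], [2,1,0,1,1,2,1,0], [0,0,1,2,0,1,2,1], [2,1,1,2,0,0,0,1], [0,0,0,0,1,2,1,2], [0,1,1,0,0,1,0,0], [1,0,2,1,2,1,1,0], [1,2,0,1,1,0,2,1]],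
  [[0,1,2,1,1,0,0,0], [1,0,0,1,0,0,1,0], [1,2,1,2,1,2,2,1], [2,1,0,0,0,1,0,1], [0,0,1,0,2,1,1,2], [2,1,1,0,1,2,0,0], [0,0,2,1,0,1,1,0], [0,1,0,1,2,1,2,1], [1,0,1,2,1,0,0,1], [1,2,0,0,0,0,1,2], [1,0,0,0,2,1,0,0], [1,2,1,0,1,0,1,0], [2,1,2,1,0,0,2,1], [0,0,0,1,1,2,0,1], [0,1,1,2,0,1,1,2], [0,0,1,2,0,0,0,0], [0,1,0,0,1,2,1,0], [1,0,1,0,0,1,2,1], [1,2,2,1,2,1,0,1], [2,1,0,1,1,0,1,2], [1,2,0,1,0,1,0,0], [2,1,1,2,2,1,1,0], [0,0,0,0,1,0,2,1], [0,1,1,0,0,0,0,1], [1,0,2,1,1,2,1,2]],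
  [[2,1,1,2,0,1,2,1], [0,0,0,0,2,1,0,1], [0,1,1,0,1,0,1,2], [1,0,2,1,0,0,0,0], [1,2,0,1,1,2,1,0], [1,0,0,1,1,0,2,1], [1,2,1,2,0,0,0,1], [2,1,0,0,1,2,1,2], [0,0,1,0,0,1,0,0], [0,1,2,1,2,1,1,0], [0,0,2,1,1,2,2,1], [0,1,0,1,0,1,0,1], [1,0,1,2,2,1,1,2], [1,2,0,0,1,0,0,0], [2,1,1,0,0,0,1,0], [1,2,1,0,2,1,2,1], [2,1,2,1,1,0,0,1], [0,0,0,1,0,0,1,2], [0,1,1,2,1,2,0,0], [1,0,0,0,0,1,1,0], [0,1,0,0,0,0,2,1], [1,0,1,0,1,2,0,1], [1,2,2,1,0,1,1,2], [2,1,0,1,2,1,0,0], [0,0,1,2,1,0,1,0]],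
  [[1,0,1,0,0,0,1,2], [1,2,2,1,1,2,0,0], [2,1,0,1,0,1,1,0], [0,0,1,2,2,1,2,1], [0,1,0,0,1,0,0,1], [0,0,0,0,0,1,1,2], [0,1,1,0,2,1,0,0], [1,0,2,1,1,0,1,0], [1,2,0,1,0,0,2,1], [2,1,1,2,1,2,0,1], [1,2,1,2,1,0,1,2], [2,1,0,0,0,0,0,0], [0,0,1,0,1,2,1,0], [0,1,2,1,0,1,2,1], [1,0,0,1,2,1,0,1], [0,1,0,1,1,2,1,2], [1,0,1,2,0,1,0,0], [1,2,0,0,2,1,1,0], [2,1,1,0,1,0,2,1], [0,0,2,1,0,0,0,1], [2,1,2,1,2,1,1,2], [0,0,0,1,1,0,0,0], [0,1,1,2,0,0,1,0], [1,0,0,0,1,2,2,1], [1,2,1,0,0,1,0,1]],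
  [[0,0,0,1,2,1,1,0], [0,1,1,2,1,0,2,1], [1,0,0,0,0,0,0,1], [1,2,1,0,1,2,1,2], [2,1,2,1,0,1,0,0], [1,2,2,1,0,0,1,0], [2,1,0,1,1,2,2,1], [0,0,1,2,0,1,0,1], [0,1,0,0,2,1,1,2], [1,0,1,0,1,0,0,0], [0,1,1,0,0,1,1,0], [1,0,2,1,2,1,2,1], [1,2,0,1,1,0,0,1], [2,1,1,2,0,0,1,2], [0,0,0,0,1,2,0,0], [2,1,0,0,1,0,1,0], [0,0,1,0,0,0,2,1], [0,1,2,1,1,2,0,1], [1,0,0,1,0,1,1,2], [1,2,1,2,2,1,0,0], [1,0,1,2,1,2,1,0], [1,2,0,0,0,1,2,1], [2,1,1,0,2,1,0,1], [0,0,2,1,1,0,1,2], [0,1,0,1,0,0,0,0]],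
  [[1,2,0,0,1,2,0,1], [2,1,1,0,0,1,1,2], [0,0,2,1,2,1,0,0], [0,1,0,1,1,0,1,0], [1,0,1,2,0,0,2,1], [0,1,1,2,2,1,0,1], [1,0,0,0,1,0,1,2], [1,2,1,0,0,0,0,0], [2,1,2,1,1,2,1,0], [0,0,0,1,0,1,2,1], [2,1,0,1,0,0,0,1], [0,0,1,2,1,2,1,2], [0,1,0,0,0,1,0,0], [1,0,1,0,2,1,1,0], [1,2,2,1,1,0,2,1], [1,0,2,1,0,1,0,1], [1,2,0,1,2,1,1,2], [2,1,1,2,1,0,0,0], [0,0,0,0,0,0,1,0], [0,1,1,0,1,2,2,1], [0,0,1,0,1,0,0,1], [0,1,2,1,0,0,1,2], [1,0,0,1,1,2,0,0], [1,2,1,2,0,1,1,0], [2,1,0,0,2,1,2,1]],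
  [[1,0,1,2,2,1,0,0], [1,2,0,0,1,0,1,0], [2,1,1,0,0,0,2,1], [0,0,2,1,1,2,0,1], [0,1,0,1,0,1,1,2], [0,0,0,1,0,0,0,0], [0,1,1,2,1,2,1,0], [1,0,0,0,0,1,2,1], [1,2,1,0,2,1,0,1], [2,1,2,1,1,0,1,2], [1,2,2,1,0,1,0,0], [2,1,0,1,2,1,1,0], [0,0,1,2,1,0,2,1], [0,1,0,0,0,0,0,1], [1,0,1,0,1,2,1,2], [0,1,1,0,1,0,0,0], [1,0,2,1,0,0,1,0], [1,2,0,1,1,2,2,1], [2,1,1,2,0,1,0,1], [0,0,0,0,2,1,1,2], [2,1,0,0,1,2,0,0], [0,0,1,0,0,1,1,0], [0,1,2,1,2,1,2,1], [1,0,0,1,1,0,0,1], [1,2,1,2,0,0,1,2]],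
  [[0,0,1,0,1,2,2,1], [0,1,2,1,0,1,0,1], [1,0,0,1,2,1,1,2], [1,2,1,2,1,0,0,0], [2,1,0,0,0,0,1,0], [1,2,0,0,2,1,2,1], [2,1,1,0,1,0,0,1], [0,0,2,1,0,0,1,2], [0,1,0,1,1,2,0,0], [1,0,1,2,0,1,1,0], [0,1,1,2,0,0,2,1], [1,0,0,0,1,2,0,1], [1,2,1,0,0,1,1,2], [2,1,2,1,2,1,0,0], [0,0,0,1,1,0,1,0], [2,1,0,1,0,1,2,1], [0,0,1,2,2,1,0,1], [0,1,0,0,1,0,1,2], [1,0,1,0,0,0,0,0], [1,2,2,1,1,2,1,0], [1,0,2,1,1,0,2,1], [1,2,0,1,0,0,0,1], [2,1,1,2,1,2,1,2], [0,0,0,0,0,1,0,0], [0,1,1,0,2,1,1,0]],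
  [[1,2,0,1,1,0,1,2], [2,1,1,2,0,0,0,0], [0,0,0,0,1,2,1,0], [0,1,1,0,0,1,2,1], [1,0,2,1,2,1,0,1], [0,1,2,1,1,2,1,2], [1,0,0,1,0,1,0,0], [1,2,1,2,2,1,1,0], [2,1,0,0,1,0,2,1], [0,0,1,0,0,0,0,1], [2,1,1,0,2,1,1,2], [0,0,2,1,1,0,0,0], [0,1,0,1,0,0,1,0], [1,0,1,2,1,2,2,1], [1,2,0,0,0,1,0,1], [1,0,0,0,0,0,1,2], [1,2,1,0,1,2,0,0], [2,1,2,1,0,1,1,0], [0,0,0,1,2,1,2,1], [0,1,1,2,1,0,0,1], [0,0,1,2,0,1,1,2], [0,1,0,0,2,1,0,0], [1,0,1,0,1,0,1,0], [1,2,2,1,0,0,2,1], [2,1,0,1,1,2,0,1]],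
  [[0,1,0,0,0,1,1,0], [1,0,1,0,2,1,2,1], [1,2,2,1,1,0,0,1], [2,1,0,1,0,0,1,2], [0,0,1,2,1,2,0,0], [2,1,1,2,1,0,1,0], [0,0,0,0,0,0,2,1], [0,1,1,0,1,2,0,1], [1,0,2,1,0,1,1,2], [1,2,0,1,2,1,0,0], [1,0,0,1,1,2,1,0], [1,2,1,2,0,1,2,1], [2,1,0,0,2,1,0,1], [0,0,1,0,1,0,1,2], [0,1,2,1,0,0,0,0], [0,0,2,1,2,1,1,0], [0,1,0,1,1,0,2,1], [1,0,1,2,0,0,0,1], [1,2,0,0,1,2,1,2], [2,1,1,0,0,1,0,0], [1,2,1,0,0,0,1,0], [2,1,2,1,1,2,2,1], [0,0,0,1,0,1,0,1], [0,1,1,2,2,1,1,2], [1,0,0,0,1,0,0,0]],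
  [[2,1,2,1,0,0,0,1], [0,0,0,1,1,2,1,2], [0,1,1,2,0,1,0,0], [1,0,0,0,2,1,1,0], [1,2,1,0,1,0,2,1], [1,0,1,0,0,1,0,1], [1,2,2,1,2,1,1,2], [2,1,0,1,1,0,0,0], [0,0,1,2,0,0,1,0], [0,1,0,0,1,2,2,1], [0,0,0,0,1,0,0,1], [0,1,1,0,0,0,1,2], [1,0,2,1,1,2,0,0], [1,2,0,1,0,1,1,0], [2,1,1,2,2,1,2,1], [1,2,1,2,1,2,0,1], [2,1,0,0,0,1,1,2], [0,0,1,0,2,1,0,0], [0,1,2,1,1,0,1,0], [1,0,0,1,0,0,2,1], [0,1,0,1,2,1,0,1], [1,0,1,2,1,0,1,2], [1,2,0,0,0,0,0,0], [2,1,1,0,1,2,1,0], [0,0,2,1,0,1,2,1]],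
  [[1,2,1,0,0,1,0,0], [2,1,2,1,2,1,1,0], [0,0,0,1,1,0,2,1], [0,1,1,2,0,0,0,1], [1,0,0,0,1,2,1,2], [0,1,0,0,1,0,0,0], [1,0,1,0,0,0,1,0], [1,2,2,1,1,2,2,1], [2,1,0,1,0,1,0,1], [0,0,1,2,2,1,1,2], [2,1,1,2,1,2,0,0], [0,0,0,0,0,1,1,0], [0,1,1,0,2,1,2,1], [1,0,2,1,1,0,0,1], [1,2,0,1,0,0,1,2], [1,0,0,1,2,1,0,0], [1,2,1,2,1,0,1,0], [2,1,0,0,0,0,2,1], [0,0,1,0,1,2,0,1], [0,1,2,1,0,1,1,2], [0,0,2,1,0,0,0,0], [0,1,0,1,1,2,1,0], [1,0,1,2,0,1,2,1], [1,2,0,0,2,1,0,1], [2,1,1,0,1,0,1,2]],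
  [[0,1,0,1,0,0,2,1], [1,0,1,2,1,2,0,1], [1,2,0,0,0,1,1,2], [2,1,1,0,2,1,0,0], [0,0,2,1,1,0,1,0], [2,1,2,1,0,1,2,1], [0,0,0,1,2,1,0,1], [0,1,1,2,1,0,1,2], [1,0,0,0,0,0,0,0], [1,2,1,0,1,2,1,0], [1,0,1,0,1,0,2,1], [1,2,2,1,0,0,0,1], [2,1,0,1,1,2,1,2], [0,0,1,2,0,1,0,0], [0,1,0,0,2,1,1,0], [0,0,0,0,1,2,2,1], [0,1,1,0,0,1,0,1], [1,0,2,1,2,1,1,2], [1,2,0,1,1,0,0,0], [2,1,1,2,0,0,1,0], [1,2,1,2,2,1,2,1], [2,1,0,0,1,0,0,1], [0,0,1,0,0,0,1,2], [0,1,2,1,1,2,0,0], [1,0,0,1,0,1,1,0]],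
  [[2,1,0,0,2,1,1,2], [0,0,1,0,1,0,0,0], [0,1,2,1,0,0,1,0], [1,0,0,1,1,2,2,1], [1,2,1,2,0,1,0,1], [1,0,1,2,0,0,1,2], [1,2,0,0,1,2,0,0], [2,1,1,0,0,1,1,0], [0,0,2,1,2,1,2,1], [0,1,0,1,1,0,0,1], [0,0,0,1,0,1,1,2], [0,1,1,2,2,1,0,0], [1,0,0,0,1,0,1,0], [1,2,1,0,0,0,2,1], [2,1,2,1,1,2,0,1], [1,2,2,1,1,0,1,2], [2,1,0,1,0,0,0,0], [0,0,1,2,1,2,1,0], [0,1,0,0,0,1,2,1], [1,0,1,0,2,1,0,1], [0,1,1,0,1,2,1,2], [1,0,2,1,0,1,0,0], [1,2,0,1,2,1,1,0], [2,1,1,2,1,0,2,1], [0,0,0,0,0,0,0,1]],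
  [[1,0,2,1,1,2,1,0], [1,2,0,1,0,1,2,1], [2,1,1,2,2,1,0,1], [0,0,0,0,1,0,1,2], [0,1,1,0,0,0,0,0], [0,0,1,0,2,1,1,0], [0,1,2,1,1,0,2,1], [1,0,0,1,0,0,0,1], [1,2,1,2,1,2,1,2], [2,1,0,0,0,1,0,0], [1,2,0,0,0,0,1,0], [2,1,1,0,1,2,2,1], [0,0,2,1,0,1,0,1], [0,1,0,1,2,1,1,2], [1,0,1,2,1,0,0,0], [0,1,1,2,0,1,1,0], [1,0,0,0,2,1,2,1], [1,2,1,0,1,0,0,1], [2,1,2,1,0,0,1,2], [0,0,0,1,1,2,0,0], [2,1,0,1,1,0,1,0], [0,0,1,2,0,0,2,1], [0,1,0,0,1,2,0,1], [1,0,1,0,0,1,1,2], [1,2,2,1,2,1,0,0]],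
  [[0,0,1,2,1,0,0,1], [0,1,0,0,0,0,1,2], [1,0,1,0,1,2,0,0], [1,2,2,1,0,1,1,0], [2,1,0,1,2,1,2,1], [1,2,0,1,1,2,0,1], [2,1,1,2,0,1,1,2], [0,0,0,0,2,1,0,0], [0,1,1,0,1,0,1,0], [1,0,2,1,0,0,2,1], [0,1,2,1,2,1,0,1], [1,0,0,1,1,0,1,2], [1,2,1,2,0,0,0,0], [2,1,0,0,1,2,1,0], [0,0,1,0,0,1,2,1], [2,1,1,0,0,0,0,1], [0,0,2,1,1,2,1,2], [0,1,0,1,0,1,0,0], [1,0,1,2,2,1,1,0], [1,2,0,0,1,0,2,1], [1,0,0,0,0,1,0,1], [1,2,1,0,2,1,1,2], [2,1,2,1,1,0,0,0], [0,0,0,1,0,0,1,0], [0,1,1,2,1,2,2,1]],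
  [[2,1,0,1,1,2,0,0], [0,0,1,2,0,1,1,0], [0,1,0,0,2,1,2,1], [1,0,1,0,1,0,0,1], [1,2,2,1,0,0,1,2], [1,0,2,1,2,1,0,0], [1,2,0,1,1,0,1,0], [2,1,1,2,0,0,2,1], [0,0,0,0,1,2,0,1], [0,1,1,0,0,1,1,2], [0,0,1,0,0,0,0,0], [0,1,2,1,1,2,1,0], [1,0,0,1,0,1,2,1], [1,2,1,2,2,1,0,1], [2,1,0,0,1,0,1,2], [1,2,0,0,0,1,0,0], [2,1,1,0,2,1,1,0], [0,0,2,1,1,0,2,1], [0,1,0,1,0,0,0,1], [1,0,1,2,1,2,1,2], [0,1,1,2,1,0,0,0], [1,0,0,0,0,0,1,0], [1,2,1,0,1,2,2,1], [2,1,2,1,0,1,0,1], [0,0,0,1,2,1,1,2]],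
  [[1,0,0,0,1,0,2,1], [1,2,1,0,0,0,0,1], [2,1,2,1,1,2,1,2], [0,0,0,1,0,1,0,0], [0,1,1,2,2,1,1,0], [0,0,1,2,1,2,2,1], [0,1,0,0,0,1,0,1], [1,0,1,0,2,1,1,2], [1,2,2,1,1,0,0,0], [2,1,0,1,0,0,1,0], [1,2,0,1,2,1,2,1], [2,1,1,2,1,0,0,1], [0,0,0,0,0,0,1,2], [0,1,1,0,1,2,0,0], [1,0,2,1,0,1,1,0], [0,1,2,1,0,0,2,1], [1,0,0,1,1,2,0,1], [1,2,1,2,0,1,1,2], [2,1,0,0,2,1,0,0], [0,0,1,0,1,0,1,0], [2,1,1,0,0,1,2,1], [0,0,2,1,2,1,0,1], [0,1,0,1,1,0,1,2], [1,0,1,2,0,0,0,0], [1,2,0,0,1,2,1,0]],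
  [[0,0,2,1,0,1,1,2], [0,1,0,1,2,1,0,0], [1,0,1,2,1,0,1,0], [1,2,0,0,0,0,2,1], [2,1,1,0,1,2,0,1], [1,2,1,0,1,0,1,2], [2,1,2,1,0,0,0,0], [0,0,0,1,1,2,1,0], [0,1,1,2,0,1,2,1], [1,0,0,0,2,1,0,1], [0,1,0,0,1,2,1,2], [1,0,1,0,0,1,0,0], [1,2,2,1,2,1,1,0], [2,1,0,1,1,0,2,1], [0,0,1,2,0,0,0,1], [2,1,1,2,2,1,1,2], [0,0,0,0,1,0,0,0], [0,1,1,0,0,0,1,0], [1,0,2,1,1,2,2,1], [1,2,0,1,0,1,0,1], [1,0,0,1,0,0,1,2], [1,2,1,2,1,2,0,0], [2,1,0,0,0,1,1,0], [0,0,1,0,2,1,2,1], [0,1,2,1,1,0,0,1]],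
  [[1,2,1,2,0,0,1,0], [2,1,0,0,1,2,2,1], [0,0,1,0,0,1,0,1], [0,1,2,1,2,1,1,2], [1,0,0,1,1,0,0,0], [0,1,0,1,0,1,1,0], [1,0,1,2,2,1,2,1], [1,2,0,0,1,0,0,1], [2,1,1,0,0,0,1,2], [0,0,2,1,1,2,0,0], [2,1,2,1,1,0,1,0], [0,0,0,1,0,0,2,1], [0,1,1,2,1,2,0,1], [1,0,0,0,0,1,1,2], [1,2,1,0,2,1,0,0], [1,0,1,0,1,2,1,0], [1,2,2,1,0,1,2,1], [2,1,0,1,2,1,0,1], [0,0,1,2,1,0,1,2], [0,1,0,0,0,0,0,0], [0,0,0,0,2,1,1,0], [0,1,1,0,1,0,2,1], [1,0,2,1,0,0,0,1], [1,2,0,1,1,2,1,2], [2,1,1,2,0,1,0,0]],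
  [[0,1,1,0,2,1,0,1], [1,0,2,1,1,0,1,2], [1,2,0,1,0,0,0,0], [2,1,1,2,1,2,1,0], [0,0,0,0,0,1,2,1], [2,1,0,0,0,0,0,1], [0,0,1,0,1,2,1,2], [0,1,2,1,0,1,0,0], [1,0,0,1,2,1,1,0], [1,2,1,2,1,0,2,1], [1,0,1,2,0,1,0,1], [1,2,0,0,2,1,1,2], [2,1,1,0,1,0,0,0], [0,0,2,1,0,0,1,0], [0,1,0,1,1,2,2,1], [0,0,0,1,1,0,0,1], [0,1,1,2,0,0,1,2], [1,0,0,0,1,2,0,0], [1,2,1,0,0,1,1,0], [2,1,2,1,2,1,2,1], [1,2,2,1,1,2,0,1], [2,1,0,1,0,1,1,2], [0,0,1,2,2,1,0,0], [0,1,0,0,1,0,1,0], [1,0,1,0,0,0,2,1]]]"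

definition A16 :: "nat \<Rightarrow> nat \<Rightarrow> int" where "A16 i j = M16 ! i ! j"
definition A25 :: "nat \<Rightarrow> nat \<Rightarrow> int" where "A25 i j = M25 ! i ! j"

lemma A16_magic: "magic_square 16 222222220 A16"
  unfolding magic_square_def by (simp only: ball_upt sum_upt) code_simp

lemma A16_sq: "magic_square 16 4017512800668956 (\<lambda>i j. (A16 i j)^2)"
  unfolding magic_square_def by (simp only: ball_upt sum_upt) code_simp

lemma A16_blocks: "\<forall>p<4. \<forall>q<4. magic_square 4 55555555 (block 4 p q A16)"
  unfolding magic_square_def block_def by (simp only: ball_upt sum_upt) code_simp

lemma A16_val: "map (map val) MD16 = map (\<lambda>i. map (\<lambda>j. A16 i j) [0..<16]) [0..<16]"
  unfolding A16_def by code_simp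

lemma A16_wf: "list_all (list_all wf_digs) MD16" "length MD16 = 16" "list_all (\<lambda>row. length row = 16) MD16"
  by code_simp+

lemma A16_dec: "map (map D16) MD16 = map (\<lambda>i. map (\<lambda>j. (i, j)) [0..<16]) [0..<16]"
  by code_simp

lemmas A16_ent = entries_from_digits[OF A16_val A16_wf A16_dec]

lemma A25_magic: "magic_square 25 222222220 A25"
  unfolding magic_square_def by (simp only: ball_upt sum_upt) code_simp

lemma A25_sq: "magic_square 25 3469458017410630 (\<lambda>i j. (A25 i j)^2)"
  unfolding magic_square_def by (simp only: ball_upt sum_upt) code_simp

lemma A25_pan: "pandiagonal 25 222222220 A25"
  unfolding pandiagonal_def by (simp only: ball_upt sum_upt) code_simp

lemma A25_blocks: "\<forall>p<5. \<forall>q<5. magic_square 5 44444444 (block 5 p q A25)"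
  unfolding magic_square_def block_def by (simp only: ball_upt sum_upt) code_simp

lemma A25_val: "map (map val) MD25 = map (\<lambda>i. map (\<lambda>j. A25 i j) [0..<25]) [0..<25]"
  unfolding A25_def by code_simp

lemma A25_wf: "list_all (list_all wf_digs) MD25" "length MD25 = 25" "list_all (\<lambda>row. length row = 25) MD25"
  by code_simp+

lemma A25_dec: "map (map D25) MD25 = map (\<lambda>i. map (\<lambda>j. (i, j)) [0..<25]) [0..<25]"
  by code_simp

lemmas A25_ent = entries_from_digits[OF A25_val A25_wf A25_dec]

theorem mainTheorem7:
  shows "(\<exists>A :: nat \<Rightarrow> nat \<Rightarrow> int.
            bimagic_square 16 222222220 A \<and>
            distinct_entries 16 A \<and>
            (\<forall>i<16. \<forall>j<16. digits_012 (A i j)) \<and>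
            (\<forall>p<4. \<forall>q<4. magic_square 4 55555555 (block 4 p q A))) \<and>
         (\<exists>B :: nat \<Rightarrow> nat \<Rightarrow> int.
            bimagic_square 25 222222220 B \<and>
            pandiagonal 25 222222220 B \<and>
            distinct_entries 25 B \<and>
            (\<forall>i<25. \<forall>j<25. digits_012 (B i j)) \<and>
            (\<forall>p<5. \<forall>q<5. magic_square 5 44444444 (block 5 p q B)))"
  unfolding bimagic_square_def
  using A16_magic A16_sq A16_ent A16_blocks
        A25_magic A25_sq A25_pan A25_ent A25_blocks
  by blast

end
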